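(* Let $\mathbb{D}$ be the open unit disc and let $Y\subset\mathbb{D}$ have a limit point in $\mathbb{D}$. Let $H^\infty_Y$ denote the space $H^\infty$ of bounded holomorphic functions on $\mathbb{D}$ equipped with the norm $\|f\|=\sup_{y\in Y}|f(y)|$. Then $H^\infty_Y$ is separable if and only if the closure of $Y$ in $\mathbb{C}$ is contained in $\mathbb{D}$. *)

theory Defs
  imports "HOL-Complex_Analysis.Complex_Analysis"
begin

text \<open>H-infinity: bounded holomorphic functions on the open unit disc.
  Functions are total on the complex plane; only their values on the disc matter.\<close>
definition Hinf :: "(complex \<Rightarrow> complex) set" where
  "Hinf = {f. f holomorphic_on ball 0 1 \<and> bounded (f ` ball 0 1)}"

definition Ynorm :: "complex set \<Rightarrow> (complex \<Rightarrow> complex) \<Rightarrow> real" where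
  "Ynorm Y f = (SUP y\<in>Y. cmod (f y))"

definition separable_HinfY :: "complex set \<Rightarrow> bool" where
  "separable_HinfY Y \<longleftrightarrow>
     (\<exists>D. countable D \<and> D \<subseteq> Hinf \<and>
        (\<forall>f\<in>Hinf. \<forall>e>0. \<exists>g\<in>D. Ynorm Y (\<lambda>z. f z - g z) < e))"

end

theory Submission imports Defs begin

lemma M_pow:
  fixes M :: "nat \<Rightarrow> real"
  assumes MS: "\<And>k. M (Suc k) \<ge> 4 * M k" and M0: "M 0 > 0"
  shows "M (k + n) \<ge> 4 ^ n * M k"
proof (induction n)
  case 0 then show ?case by simp
next
  case (Suc n)
  have "M (k + Suc n) \<ge> 4 * M (k + n)" using MS[of "k+n"] by simp
  moreover have "4 * M (k+n) \<ge> 4 * (4 ^ n * M k)" using Suc by simp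
  ultimately show ?case by simp
qed

lemma M_pos:
  fixes M :: "nat \<Rightarrow> real"
  assumes MS: "\<And>k. M (Suc k) \<ge> 4 * M k" and M0: "M 0 > 0"
  shows "M k > 0"
proof -
  have "M (0 + k) \<ge> 4 ^ k * M 0" by (rule M_pow[OF MS M0])
  moreover have "4 ^ k * M 0 > 0" using M0 by simp
  ultimately show ?thesis by simp
qed

lemma term_bound:
  fixes M :: "nat \<Rightarrow> real"
  assumes MS: "\<And>k. M (Suc k) \<ge> 4 * M k" and M0: "M 0 > 0"
  shows "pi / M (k + n) \<le> pi / M k * (1/4) ^ n"
proof -
  have Mk: "M k > 0" by (rule M_pos[OF MS M0])
  have "M (k + n) \<ge> 4 ^ n * M k" by (rule M_pow[OF MS M0])
  then have "pi / M (k + n) \<le> pi / (4 ^ n * M k)"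
    using Mk M_pos[OF MS M0, of "k+n"] by (intro divide_left_mono) auto
  also have "\<dots> = pi / M k * (1/4) ^ n" by (simp add: power_one_over field_simps)
  finally show ?thesis .
qed

lemma geo4: "(\<lambda>n. c * (1/4::real) ^ n) sums (c * (4/3))"
proof -
  have "(\<lambda>n. (1/4::real) ^ n) sums (1 / (1 - 1/4))" by (rule geometric_sums) simp
  from sums_mult[OF this, of c] show ?thesis by simp
qed

lemma comb:
  fixes M :: "nat \<Rightarrow> real"
  assumes M0: "M 0 \<ge> 2*pi" and MS: "\<And>k. M (Suc k) \<ge> 4 * M k"
  defines "t \<equiv> \<lambda>\<epsilon>. \<Sum>k. (if \<epsilon> k then pi / M k else 0)"
  shows "0 \<le> t \<epsilon> \<and> t \<epsilon> \<le> 1" and "\<epsilon> \<noteq> \<epsilon>' \<Longrightarrow> \<exists>k. cos ((t \<epsilon> - t \<epsilon>') * M k) \<le> 0"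
proof -
  have M0p: "M 0 > 0" using M0 pi_gt_zero by linarith
  have Mp: "\<And>k. M k > 0" by (rule M_pos[OF MS M0p])
  have tb: "\<And>\<epsilon> k. norm (if \<epsilon> k then pi / M k else 0) \<le> pi / M 0 * (1/4) ^ k"
    using term_bound[OF MS M0p, of 0] Mp by (auto simp: less_imp_le)
  have sg: "summable (\<lambda>k. pi / M 0 * (1/4::real) ^ k)" using geo4 by (rule sums_summable)
  have sm: "\<And>\<epsilon>. summable (\<lambda>k. if \<epsilon> k then pi / M k else 0)"
    by (rule summable_comparison_test[OF _ sg]) (use tb in blast)
  show "0 \<le> t \<epsilon> \<and> t \<epsilon> \<le> 1"
  proof
    show "0 \<le> t \<epsilon>" unfolding t_def using Mp by (intro suminf_nonneg[OF sm]) (auto simp: less_imp_le)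
    have "t \<epsilon> \<le> (\<Sum>k. pi / M 0 * (1/4::real) ^ k)" unfolding t_def
      using tb by (intro suminf_le[OF _ sm sg]) (auto simp: abs_le_iff)
    also have "\<dots> = pi / M 0 * (4/3)" using geo4 sums_unique by metis
    also have "\<dots> \<le> 1"
    proof -
      have "pi / M 0 \<le> 1/2" using M0 M0p by (simp add: pos_divide_le_eq)
      from mult_right_mono[OF this, of "4/3"] show ?thesis by simp
    qed
    finally show "t \<epsilon> \<le> 1" .
  qed
  assume ne: "\<epsilon> \<noteq> \<epsilon>'"
  then obtain k1 where "\<epsilon> k1 \<noteq> \<epsilon>' k1" by auto
  define k0 where "k0 = (LEAST k. \<epsilon> k \<noteq> \<epsilon>' k)"
  have k0: "\<epsilon> k0 \<noteq> \<epsilon>' k0" unfolding k0_def by (rule LeastI) fact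
  have bel: "\<And>j. j < k0 \<Longrightarrow> \<epsilon> j = \<epsilon>' j" unfolding k0_def using not_less_Least by blast
  define d where "d = (\<lambda>j. (if \<epsilon> j then pi / M j else 0) - (if \<epsilon>' j then pi / M j else 0))"
  have sd: "summable d" unfolding d_def by (intro summable_diff sm)
  have "t \<epsilon> - t \<epsilon>' = suminf d" unfolding t_def d_def using suminf_diff[OF sm[of \<epsilon>] sm[of \<epsilon>']] by simp
  also have "\<dots> = (\<Sum>j. d (j + k0))"
  proof -
    have "(\<Sum>i<k0. d i) = 0" using bel by (auto simp: d_def intro!: sum.neutral)
    then show ?thesis using suminf_minus_initial_segment[OF sd, of k0] by simp
  qed
  also have "\<dots> = d k0 + (\<Sum>j. d (Suc j + k0))"
    using suminf_split_head[OF summable_ignore_initial_segment[OF sd, of k0]] by simp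
  finally have eq: "t \<epsilon> - t \<epsilon>' = d k0 + (\<Sum>j. d (Suc j + k0))" .
  define R where "R = (\<Sum>j. d (Suc j + k0))"
  have "norm R \<le> (\<Sum>j. pi / M k0 / 4 * (1/4::real) ^ j)"
    unfolding R_def
  proof (rule norm_suminf_le)
    show "summable (\<lambda>j. pi / M k0 / 4 * (1/4::real) ^ j)" using geo4 by (rule sums_summable)
    fix j
    have "norm (d (Suc j + k0)) \<le> pi / M (k0 + Suc j)"
      using Mp[of "Suc j + k0"] pi_gt_zero unfolding d_def by (auto simp: add.commute less_imp_le)
    also have "\<dots> \<le> pi / M k0 * (1/4) ^ Suc j" by (rule term_bound[OF MS M0p])
    also have "\<dots> = pi / M k0 / 4 * (1/4::real) ^ j" by simp
    finally show "norm (d (Suc j + k0)) \<le> pi / M k0 / 4 * (1/4::real) ^ j" .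
  qed
  also have "\<dots> = pi / M k0 / 4 * (4/3)" using geo4[of "pi / M k0 / 4"] sums_unique by metis
  also have "\<dots> = pi / M k0 / 3" by simp
  finally have Rb: "\<bar>R\<bar> \<le> pi / M k0 / 3" by simp
  have Rb': "\<bar>R * M k0\<bar> \<le> pi / 3" using Rb Mp[of k0] by (simp add: abs_mult field_simps)
  have cR: "cos (R * M k0) \<ge> 0" using Rb' pi_gt_zero by (intro cos_ge_zero) (auto simp: abs_le_iff)
  have "(t \<epsilon> - t \<epsilon>') * M k0 = d k0 * M k0 + R * M k0" using eq R_def by (simp add: algebra_simps)
  moreover have "d k0 * M k0 = pi \<or> d k0 * M k0 = - pi" using k0 Mp[of k0] unfolding d_def by auto
  ultimately have "cos ((t \<epsilon> - t \<epsilon>') * M k0) = - cos (R * M k0)"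
    by (auto simp: cos_add)
  then show "\<exists>k. cos ((t \<epsilon> - t \<epsilon>') * M k) \<le> 0" using cR by (intro exI[of _ k0]) simp
qed


lemma uncountable_bool_seq: "\<not> countable (UNIV :: (nat \<Rightarrow> bool) set)"
proof
  assume c: "countable (UNIV :: (nat \<Rightarrow> bool) set)"
  define h where "h = from_nat_into (UNIV :: (nat \<Rightarrow> bool) set)"
  have r: "range h = UNIV" unfolding h_def by (rule range_from_nat_into[OF _ c]) simp
  define e where "e = (\<lambda>n. \<not> h n n)"
  obtain n where "h n = e" using r by (metis UNIV_I imageE)
  then have "h n n = e n" by simp
  then show False unfolding e_def by simp
qed

lemma Re_phi_pos:
  fixes \<zeta> z :: complex
  assumes "norm \<zeta> = 1" "norm z < 1"
  shows "Re ((\<zeta> + z) / (\<zeta> - z)) > 0"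
proof -
  have ne: "\<zeta> - z \<noteq> 0" using assms by auto
  have "Re (\<zeta> + z) * Re (\<zeta> - z) + Im (\<zeta> + z) * Im (\<zeta> - z) = (Re \<zeta>)^2 + (Im \<zeta>)^2 - ((Re z)^2 + (Im z)^2)"
    by (simp add: algebra_simps power2_eq_square)
  also have "\<dots> = (norm \<zeta>)^2 - (norm z)^2" by (simp add: cmod_power2)
  also have "\<dots> > 0" using assms abs_square_less_1[of "norm z"] by simp
  finally have "Re (\<zeta> + z) * Re (\<zeta> - z) + Im (\<zeta> + z) * Im (\<zeta> - z) > 0" .
  then show ?thesis using ne by (simp add: Re_divide')
qed

definition FF :: "complex \<Rightarrow> real \<Rightarrow> complex \<Rightarrow> complex" where
  "FF \<zeta> t z = exp (\<i> * of_real t * Ln ((\<zeta> + z) / (\<zeta> - z)))"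

lemma FF_holo:
  assumes "norm \<zeta> = 1"
  shows "FF \<zeta> t holomorphic_on ball 0 1"
proof -
  have A: "(\<zeta> + z) / (\<zeta> - z) \<notin> \<real>\<^sub>\<le>\<^sub>0" if "z \<in> ball 0 1" for z
  proof -
    have "Re ((\<zeta> + z) / (\<zeta> - z)) > 0" using Re_phi_pos[OF assms] that by simp
    then show ?thesis by (auto simp: complex_nonpos_Reals_iff)
  qed
  have B: "\<zeta> - z \<noteq> 0" if "z \<in> ball 0 1" for z using that assms by auto
  show ?thesis unfolding FF_def by (intro holomorphic_intros) (use A B in auto)
qed

lemma Im_Ln_phi:
  assumes "norm \<zeta> = 1" "norm z < 1"
  shows "\<bar>Im (Ln ((\<zeta> + z) / (\<zeta> - z)))\<bar> < pi/2"
  using Re_phi_pos[OF assms] by (rule Re_Ln_pos_lt_imp)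

lemma FF_bound:
  assumes "norm \<zeta> = 1" "norm z < 1" "0 \<le> t" "t \<le> 1"
  shows "norm (FF \<zeta> t z) \<le> exp (pi/2)"
proof -
  define w where "w = Ln ((\<zeta> + z) / (\<zeta> - z))"
  have iw: "\<bar>Im w\<bar> < pi/2" unfolding w_def by (rule Im_Ln_phi[OF assms(1,2)])
  have "norm (FF \<zeta> t z) = exp (- t * Im w)" unfolding FF_def w_def[symmetric] by (simp add: norm_exp_eq_Re)
  also have "\<dots> \<le> exp (pi/2)"
  proof -
    have "\<bar>t * Im w\<bar> \<le> 1 * (pi/2)" unfolding abs_mult using assms(3,4) iw
      by (intro mult_mono) auto
    then show ?thesis by simp
  qed
  finally show ?thesis .
qed

lemma FF_sep:
  assumes "norm \<zeta> = 1" "norm z < 1" "0 \<le> t" "t \<le> 1"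
    and c: "cos ((s - t) * Re (Ln ((\<zeta> + z) / (\<zeta> - z)))) \<le> 0"
  shows "norm (FF \<zeta> s z - FF \<zeta> t z) \<ge> exp (- (pi/2))"
proof -
  define w where "w = Ln ((\<zeta> + z) / (\<zeta> - z))"
  have iw: "\<bar>Im w\<bar> < pi/2" unfolding w_def by (rule Im_Ln_phi[OF assms(1,2)])
  have c': "cos ((s - t) * Re w) \<le> 0" using c unfolding w_def .
  have split: "FF \<zeta> s z - FF \<zeta> t z = exp (\<i> * of_real t * w) * (exp (\<i> * of_real (s - t) * w) - 1)"
    unfolding FF_def w_def[symmetric]
    by (simp add: exp_add[symmetric] algebra_simps)
  have n1: "norm (exp (\<i> * of_real t * w)) \<ge> exp (- (pi/2))"
  proof -
    have "\<bar>t * Im w\<bar> \<le> 1 * (pi/2)" unfolding abs_mult using assms(3,4) iw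
      by (intro mult_mono) auto
    then have "- t * Im w \<ge> - (pi/2)" by (simp add: abs_le_iff)
    then show ?thesis by (simp add: norm_exp_eq_Re)
  qed
  have n2: "norm (exp (\<i> * of_real (s - t) * w) - 1) \<ge> 1"
  proof -
    have "Re (exp (\<i> * of_real (s - t) * w)) = exp (- (s - t) * Im w) * cos ((s - t) * Re w)"
      by (auto simp: Re_exp algebra_simps)
    also have "\<dots> \<le> 0" using c' by (simp add: mult_nonneg_nonpos)
    finally have "Re (exp (\<i> * of_real (s - t) * w)) \<le> 0" .
    then have "1 \<le> \<bar>Re (exp (\<i> * of_real (s - t) * w) - 1)\<bar>" by simp
    also have "\<dots> \<le> norm (exp (\<i> * of_real (s - t) * w) - 1)" by (rule abs_Re_le_cmod)
    finally show ?thesis .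
  qed
  have "exp (- (pi/2)) * 1 \<le> norm (exp (\<i> * of_real t * w)) * norm (exp (\<i> * of_real (s - t) * w) - 1)"
    using n1 n2 by (intro mult_mono) auto
  then show ?thesis unfolding split norm_mult by simp
qed

lemma big_L:
  fixes Y :: "complex set"
  assumes Y: "Y \<subseteq> ball 0 1" and z: "\<zeta> \<in> closure Y" and n: "norm \<zeta> = 1"
  shows "\<exists>y\<in>Y. Re (Ln ((\<zeta> + y) / (\<zeta> - y))) \<ge> B"
proof -
  obtain y where y: "y \<in> Y" and d: "dist \<zeta> y < min 1 (exp (- B))"
    using closure_approachableD[OF z, of "min 1 (exp (-B))"] by auto
  have yb: "norm y < 1" using y Y by auto
  have ne: "\<zeta> - y \<noteq> 0" using yb n by auto
  have d1: "norm (\<zeta> - y) < 1" "norm (\<zeta> - y) < exp (- B)" using d by (auto simp: dist_norm)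
  have "norm (\<zeta> + y) \<ge> 1"
  proof -
    have "2 = norm (2 * \<zeta>)" using n by (simp add: norm_mult)
    also have "\<dots> = norm ((\<zeta> + y) + (\<zeta> - y))" by (simp add: algebra_simps)
    also have "\<dots> \<le> norm (\<zeta> + y) + norm (\<zeta> - y)" by (rule norm_triangle_ineq)
    finally show ?thesis using d1 by linarith
  qed
  then have "norm ((\<zeta> + y) / (\<zeta> - y)) \<ge> 1 / norm (\<zeta> - y)"
    using ne by (simp add: norm_divide divide_right_mono)
  moreover have "1 / norm (\<zeta> - y) > exp B"
    using d1(2) ne by (simp add: exp_minus field_simps)
  ultimately have gt: "norm ((\<zeta> + y) / (\<zeta> - y)) > exp B" by linarith
  then have nz: "(\<zeta> + y) / (\<zeta> - y) \<noteq> 0" by auto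
  then have "Re (Ln ((\<zeta> + y) / (\<zeta> - y))) = ln (norm ((\<zeta> + y) / (\<zeta> - y)))" by simp
  also have "\<dots> > B" using gt nz ln_less_cancel_iff[of "exp B" "norm ((\<zeta> + y) / (\<zeta> - y))"] by (simp del: divide_eq_0_iff)
  finally show ?thesis using y by (intro bexI[of _ y]) auto
qed

lemma seq_build:
  fixes L :: "complex \<Rightarrow> real"
  assumes "\<And>B. \<exists>y\<in>Y. L y \<ge> B"
  shows "\<exists>ys. (\<forall>k. ys k \<in> Y) \<and> L (ys 0) \<ge> 2*pi \<and> (\<forall>k. L (ys (Suc k)) \<ge> 4 * L (ys k))"
proof -
  obtain g where g: "\<And>B. g B \<in> Y \<and> L (g B) \<ge> B" using assms by metis
  define ys where "ys = rec_nat (g (2*pi)) (\<lambda>_ y. g (4 * L y))"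
  have "ys 0 = g (2*pi)" "\<And>k. ys (Suc k) = g (4 * L (ys k))" unfolding ys_def by simp_all
  then show ?thesis using g by (intro exI[of _ ys]) (metis nat.exhaust)
qed


definition cq :: "rat \<times> rat \<Rightarrow> complex" where
  "cq p = Complex (of_rat (fst p)) (of_rat (snd p))"

definition polyf :: "(rat \<times> rat) list \<Rightarrow> complex \<Rightarrow> complex" where
  "polyf cs z = (\<Sum>i<length cs. cq (cs ! i) * z ^ i)"

lemma cq_dense:
  assumes "d > 0"
  shows "\<exists>p. norm (c - cq p) < d"
proof -
  obtain x where x: "x \<in> \<rat>" "Re c - d/2 < x" "x < Re c + d/2"
    using Rats_dense_in_real[of "Re c - d/2" "Re c + d/2"] assms by auto
  obtain y where y: "y \<in> \<rat>" "Im c - d/2 < y" "y < Im c + d/2"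
    using Rats_dense_in_real[of "Im c - d/2" "Im c + d/2"] assms by auto
  obtain a where a: "x = of_rat a" using x(1) Rats_cases by blast
  obtain b where b: "y = of_rat b" using y(1) Rats_cases by blast
  have "norm (c - cq (a, b)) \<le> \<bar>Re (c - cq (a, b))\<bar> + \<bar>Im (c - cq (a, b))\<bar>" by (rule cmod_le)
  also have "\<dots> < d" using x y a b by (simp add: cq_def abs_less_iff)
  finally show ?thesis by blast
qed

lemma polyf_Hinf: "polyf cs \<in> Hinf"
proof -
  have h: "polyf cs holomorphic_on UNIV" unfolding polyf_def by (intro holomorphic_intros)
  then have "continuous_on (cball 0 1) (polyf cs)"
    by (meson holomorphic_on_imp_continuous_on holomorphic_on_subset subset_UNIV)
  then have "bounded (polyf cs ` cball 0 1)" by (intro compact_imp_bounded compact_continuous_image) auto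
  then have "bounded (polyf cs ` ball 0 1)" by (rule bounded_subset) auto
  then show ?thesis unfolding Hinf_def using holomorphic_on_subset[OF h] by auto
qed

lemma sep_dir:
  fixes Y :: "complex set"
  assumes Yb: "closure Y \<subseteq> ball 0 1" and Yne: "Y \<noteq> {}"
  shows "separable_HinfY Y"
proof -
  have bY: "bounded Y" using Yb closure_subset by (meson bounded_ball bounded_subset order_trans)
  have cY: "compact (norm ` closure Y)"
    using bY by (intro compact_continuous_image continuous_intros) (simp add: compact_closure)
  obtain r0 where r0: "r0 \<in> norm ` closure Y" "\<And>u. u \<in> norm ` closure Y \<Longrightarrow> u \<le> r0"
    using compact_attains_sup[OF cY] Yne by auto
  define r where "r = r0"
  have r1: "r < 1" using r0(1) Yb unfolding r_def by auto
  have r0': "0 \<le> r" using r0(1) unfolding r_def by auto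
  have rY: "\<And>y. y \<in> Y \<Longrightarrow> norm y \<le> r" using r0(2) closure_subset unfolding r_def by auto
  define s where "s = (1 + r) / 2"
  have s: "r < s" "s < 1" "0 < s" using r1 r0' unfolding s_def by auto
  define D where "D = range polyf"
  have cD: "countable D" unfolding D_def by (intro countable_image countableI_type)
  have DH: "D \<subseteq> Hinf" unfolding D_def using polyf_Hinf by auto
  have approx: "\<exists>g\<in>D. Ynorm Y (\<lambda>z. f z - g z) < e" if f: "f \<in> Hinf" and e: "e > 0" for f e
  proof -
    have hf: "f holomorphic_on ball 0 1" and bf: "bounded (f ` ball 0 1)" using f unfolding Hinf_def by auto
    obtain B where B: "B > 0" "\<And>z. z \<in> ball 0 1 \<Longrightarrow> norm (f z) \<le> B"
      using bf by (auto simp: bounded_pos)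
    define a where "a = (\<lambda>n. (deriv ^^ n) f 0 / fact n)"
    have an: "norm (a n) \<le> B / s ^ n" for n
    proof -
      have "norm ((deriv ^^ n) f 0) \<le> fact n * B / s ^ n"
      proof (rule Cauchy_inequality)
        show "f holomorphic_on ball 0 s" by (rule holomorphic_on_subset[OF hf]) (use s in auto)
        show "continuous_on (cball 0 s) f"
          by (rule continuous_on_subset[OF holomorphic_on_imp_continuous_on[OF hf]]) (use s in auto)
        show "0 < s" by fact
        show "norm (f x) \<le> B" if "norm (0 - x) = s" for x using B(2)[of x] that s by auto
      qed
      then show ?thesis unfolding a_def by (simp add: norm_divide field_simps)
    qed
    define q where "q = r / s"
    have q: "0 \<le> q" "q < 1" using s r0' unfolding q_def by auto
    obtain N where N: "q ^ N < e / 4 * (1 - q) / B"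
      using real_arch_pow_inv[of "e / 4 * (1 - q) / B" q] e B q by auto
    have NB: "B * q ^ N / (1 - q) < e / 4"
      using N B q by (simp add: field_simps)
    have tail: "norm (f w - (\<Sum>i<N. a i * w ^ i)) \<le> B * q ^ N / (1 - q)" if w: "norm w \<le> r" for w
    proof -
      have "(\<lambda>n. a n * w ^ n) sums f w"
        using holomorphic_power_series[OF hf, of w] w r1 unfolding a_def by simp
      then have ts: "(\<lambda>i. a (i + N) * w ^ (i + N)) sums (f w - (\<Sum>i<N. a i * w ^ i))"
        by (rule sums_split_initial_segment)
      have gs: "(\<lambda>i. B * q ^ N * q ^ i) sums (B * q ^ N * (1 / (1 - q)))"
        using geometric_sums[of q] q by (intro sums_mult) auto
      have "norm (f w - (\<Sum>i<N. a i * w ^ i)) = norm (\<Sum>i. a (i + N) * w ^ (i + N))"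
        using ts sums_unique by metis
      also have "\<dots> \<le> (\<Sum>i. B * q ^ N * q ^ i)"
      proof (rule norm_suminf_le)
        show "summable (\<lambda>i. B * q ^ N * q ^ i)" using gs by (rule sums_summable)
        fix i
        have "norm (a (i + N) * w ^ (i + N)) = norm (a (i + N)) * norm w ^ (i + N)"
          by (simp add: norm_mult norm_power)
        also have "\<dots> \<le> B / s ^ (i + N) * r ^ (i + N)"
          using an w B s by (intro mult_mono power_mono) (auto simp: less_imp_le)
        also have "\<dots> = B * q ^ (i + N)" unfolding q_def by (simp add: power_divide)
        also have "\<dots> = B * q ^ N * q ^ i" by (simp add: power_add)
        finally show "norm (a (i + N) * w ^ (i + N)) \<le> B * q ^ N * q ^ i" .
      qed
      also have "\<dots> = B * q ^ N / (1 - q)" using gs sums_unique by fastforce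
      finally show ?thesis .
    qed
    define d where "d = e / (4 * (real N + 1))"
    have d: "d > 0" using e unfolding d_def by auto
    have "\<forall>n. \<exists>p. norm (a n - cq p) < d" using cq_dense[OF d] by blast
    then obtain qq where qq: "\<And>n. norm (a n - cq (qq n)) < d" by metis
    define cs where "cs = map qq [0..<N]"
    have pc: "polyf cs w = (\<Sum>i<N. cq (qq i) * w ^ i)" for w
      unfolding polyf_def cs_def by (intro sum.cong) auto
    have rat_err: "norm ((\<Sum>i<N. a i * w ^ i) - polyf cs w) \<le> real N * d" if w: "norm w \<le> 1" for w
    proof -
      have "norm ((\<Sum>i<N. a i * w ^ i) - polyf cs w) = norm (\<Sum>i<N. (a i - cq (qq i)) * w ^ i)"
        unfolding pc by (simp add: sum_subtractf algebra_simps)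
      also have "\<dots> \<le> (\<Sum>i<N. norm ((a i - cq (qq i)) * w ^ i))" by (rule norm_sum)
      also have "\<dots> \<le> (\<Sum>i<N. d)"
      proof (rule sum_mono)
        fix i
        have "norm ((a i - cq (qq i)) * w ^ i) = norm (a i - cq (qq i)) * norm w ^ i"
          by (simp add: norm_mult norm_power)
        also have "\<dots> \<le> d * 1" using qq[of i] w d by (intro mult_mono power_le_one) auto
        finally show "norm ((a i - cq (qq i)) * w ^ i) \<le> d" by simp
      qed
      also have "\<dots> = real N * d" by simp
      finally show ?thesis .
    qed
    have Nd: "real N * d < e / 4" unfolding d_def using e by (simp add: field_simps)
    have pt: "norm (f y - polyf cs y) \<le> e / 2" if y: "y \<in> Y" for y
    proof -
      have "norm (f y - polyf cs y) \<le> norm (f y - (\<Sum>i<N. a i * y ^ i)) + norm ((\<Sum>i<N. a i * y ^ i) - polyf cs y)"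
        by (rule norm_diff_triangle_ineq[THEN order_trans[rotated]]) simp
      also have "\<dots> \<le> B * q ^ N / (1 - q) + real N * d"
        using tail[of y] rat_err[of y] rY[OF y] r1 by (intro add_mono) auto
      finally show ?thesis using NB Nd by linarith
    qed
    have "Ynorm Y (\<lambda>z. f z - polyf cs z) \<le> e / 2"
      unfolding Ynorm_def using pt Yne by (intro cSUP_least) auto
    then show ?thesis unfolding D_def using e by (intro bexI[of _ "polyf cs"]) auto
  qed
  show ?thesis unfolding separable_HinfY_def using cD DH approx by blast
qed

lemma Ynorm_ge:
  assumes f: "f \<in> Hinf" and g: "g \<in> Hinf" and Y: "Y \<subseteq> ball 0 1" and y: "y \<in> Y"
  shows "norm (f y - g y) \<le> Ynorm Y (\<lambda>z. f z - g z)"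
proof -
  obtain Bf where Bf: "\<And>x. x \<in> f ` ball 0 1 \<Longrightarrow> norm x \<le> Bf"
    using f unfolding Hinf_def bounded_iff by auto
  obtain Bg where Bg: "\<And>x. x \<in> g ` ball 0 1 \<Longrightarrow> norm x \<le> Bg"
    using g unfolding Hinf_def bounded_iff by auto
  have "bdd_above ((\<lambda>y. norm (f y - g y)) ` Y)"
  proof (rule bdd_aboveI2)
    fix x assume "x \<in> Y"
    then have "x \<in> ball 0 1" using Y by auto
    then have "norm (f x) \<le> Bf" "norm (g x) \<le> Bg" using Bf Bg by auto
    then show "norm (f x - g x) \<le> Bf + Bg" using norm_triangle_ineq4[of "f x" "g x"] by linarith
  qed
  then show ?thesis unfolding Ynorm_def using y by (rule cSUP_upper2) simp
qed

theorem lemma5p13: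
  fixes Y :: "complex set"
  assumes "Y \<subseteq> ball 0 1"
    and "\<exists>z\<in>ball 0 1. z islimpt Y"
  shows "separable_HinfY Y \<longleftrightarrow> closure Y \<subseteq> ball 0 1"
proof
  assume sep: "separable_HinfY Y"
  show "closure Y \<subseteq> ball 0 1"
  proof (rule ccontr)
    assume "\<not> closure Y \<subseteq> ball 0 1"
    then obtain \<zeta> where z: "\<zeta> \<in> closure Y" "\<zeta> \<notin> ball 0 1" by blast
    have "closure Y \<subseteq> cball 0 1" using assms(1) by (intro closure_minimal) auto
    then have n: "norm \<zeta> = 1" using z by auto
    define L where "L = (\<lambda>y. Re (Ln ((\<zeta> + y) / (\<zeta> - y))))"
    obtain ys where ys: "\<forall>k. ys k \<in> Y" "L (ys 0) \<ge> 2*pi" "\<forall>k. L (ys (Suc k)) \<ge> 4 * L (ys k)"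
      using seq_build[of Y L] big_L[OF assms(1) z(1) n] unfolding L_def by blast
    define M where "M = (\<lambda>k. L (ys k))"
    define t where "t = (\<lambda>\<epsilon>. \<Sum>k. (if \<epsilon> k then pi / M k else 0))"
    have t01: "0 \<le> t \<epsilon> \<and> t \<epsilon> \<le> 1" for \<epsilon>
      using comb(1)[of M] ys unfolding M_def t_def by auto
    have tsep: "\<exists>k. cos ((t \<epsilon> - t \<epsilon>') * M k) \<le> 0" if "\<epsilon> \<noteq> \<epsilon>'" for \<epsilon> \<epsilon>'
      using comb(2)[of M, OF _ _ that] ys unfolding M_def t_def by auto
    obtain D where D: "countable D" "D \<subseteq> Hinf"
      "\<And>f e. f \<in> Hinf \<Longrightarrow> e > 0 \<Longrightarrow> \<exists>g\<in>D. Ynorm Y (\<lambda>z. f z - g z) < e"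
      using sep unfolding separable_HinfY_def by blast
    define c where "c = exp (- (pi/2)) / 2"
    have c: "c > 0" unfolding c_def by simp
    have FH: "FF \<zeta> (t \<epsilon>) \<in> Hinf" for \<epsilon>
    proof -
      have "bounded (FF \<zeta> (t \<epsilon>) ` ball 0 1)" unfolding bounded_iff
        using FF_bound[OF n _ conjunct1[OF t01] conjunct2[OF t01]] by (intro exI[of _ "exp (pi/2)"]) auto
      then show ?thesis unfolding Hinf_def using FF_holo[OF n] by auto
    qed
    have "\<forall>\<epsilon>. \<exists>g\<in>D. Ynorm Y (\<lambda>z. FF \<zeta> (t \<epsilon>) z - g z) < c" using D(3)[OF FH c] by blast
    then obtain G where G: "\<And>\<epsilon>. G \<epsilon> \<in> D" "\<And>\<epsilon>. Ynorm Y (\<lambda>z. FF \<zeta> (t \<epsilon>) z - G \<epsilon> z) < c"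
      by metis
    have pw: "norm (FF \<zeta> (t \<epsilon>) y - G \<epsilon> y) < c" if "y \<in> Y" for \<epsilon> y
    proof -
      have "G \<epsilon> \<in> Hinf" using G(1) D(2) by blast
      from Ynorm_ge[OF FH[of \<epsilon>] this assms(1) that] G(2)[of \<epsilon>] show ?thesis by linarith
    qed
    have "inj G"
    proof (rule injI, rule ccontr)
      fix \<epsilon> \<epsilon>' assume eq: "G \<epsilon> = G \<epsilon>'" and ne: "\<epsilon> \<noteq> \<epsilon>'"
      obtain k where k: "cos ((t \<epsilon> - t \<epsilon>') * M k) \<le> 0" using tsep[OF ne] by blast
      define y where "y = ys k"
      have yY: "y \<in> Y" using ys unfolding y_def by auto
      then have yb: "norm y < 1" using assms(1) by auto
      have "norm (FF \<zeta> (t \<epsilon>) y - FF \<zeta> (t \<epsilon>') y) \<ge> exp (- (pi/2))"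
        using FF_sep[OF n yb conjunct1[OF t01] conjunct2[OF t01], of "t \<epsilon>"] k
        unfolding M_def L_def y_def by blast
      moreover have "norm (FF \<zeta> (t \<epsilon>) y - FF \<zeta> (t \<epsilon>') y) \<le>
          norm (FF \<zeta> (t \<epsilon>) y - G \<epsilon> y) + norm (FF \<zeta> (t \<epsilon>') y - G \<epsilon>' y)"
        using eq norm_triangle_ineq4[of "FF \<zeta> (t \<epsilon>) y - G \<epsilon> y" "FF \<zeta> (t \<epsilon>') y - G \<epsilon>' y"] by simp
      ultimately show False using pw[OF yY, of \<epsilon>] pw[OF yY, of \<epsilon>'] unfolding c_def by linarith
    qed
    moreover have "countable (range G)" using G(1) D(1) by (meson countable_subset image_subset_iff)
    ultimately have "countable (UNIV :: (nat \<Rightarrow> bool) set)"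
      using countable_image_inj_on by blast
    then show False using uncountable_bool_seq by blast
  qed
next
  assume "closure Y \<subseteq> ball 0 1"
  moreover have "Y \<noteq> {}" using assms(2) by auto
  ultimately show "separable_HinfY Y" by (rule sep_dir)
qed

end
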